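(* For any $a\geq b>0$, the events $\{\tau_a<\widehat{\tau}_b\}$ and $\{a-b<Y_{\widehat{\tau}_b}\}$ coincide almost surely.
   Context: Let $X$ be a spectrally negative Lévy process with non-monotone paths. Let $\overline{X}_t=\sup_{s\leq t}X_s$, $\underline{X}_t=\inf_{s\leq t}X_s$, $Y_t=\overline{X}_t-X_t$, $\widehat{Y}_t=X_t-\underline{X}_t$, $\tau_a=\inf\{t\geq0:Y_t>a\}$, $\widehat{\tau}_b=\inf\{t\geq0:\widehat{Y}_t>b\}$. *)

theory Defs
  imports "HOL-Probability.Probability"
begin

definition levy_process :: "'a measure \<Rightarrow> (real \<Rightarrow> 'a \<Rightarrow> real) \<Rightarrow> bool" where
  "levy_process M X \<longleftrightarrow>
     prob_space M \<and>
     (\<forall>t\<ge>0. X t \<in> borel_measurable M) \<and>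
     (\<forall>\<omega>\<in>space M. X 0 \<omega> = 0) \<and>
     \<comment> \<open>cadlag paths\<close>
     (\<forall>\<omega>\<in>space M. \<forall>t\<ge>0. continuous (at_right t) (\<lambda>s. X s \<omega>)
         \<and> (t > 0 \<longrightarrow> (\<exists>l. ((\<lambda>s. X s \<omega>) \<longlongrightarrow> l) (at_left t)))) \<and>
     \<comment> \<open>independent increments\<close>
     (\<forall>(n::nat) (t::nat \<Rightarrow> real). 0 \<le> t 0 \<and> (\<forall>i<n. t i < t (Suc i)) \<longrightarrow>
        prob_space.indep_vars M (\<lambda>_. borel) (\<lambda>i \<omega>. X (t (Suc i)) \<omega> - X (t i) \<omega>) {..<n}) \<and>
     \<comment> \<open>stationary increments\<close>
     (\<forall>s t. 0 \<le> s \<longrightarrow> 0 \<le> t \<longrightarrow>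
        distr M borel (\<lambda>\<omega>. X (t + s) \<omega> - X s \<omega>) = distr M borel (X t))"

definition spectrally_negative :: "'a measure \<Rightarrow> (real \<Rightarrow> 'a \<Rightarrow> real) \<Rightarrow> bool" where
  "spectrally_negative M X \<longleftrightarrow> levy_process M X \<and>
     (AE \<omega> in M. \<forall>t>0. X t \<omega> \<le> Lim (at_left t) (\<lambda>s. X s \<omega>))"

definition non_monotone_paths :: "'a measure \<Rightarrow> (real \<Rightarrow> 'a \<Rightarrow> real) \<Rightarrow> bool" where
  "non_monotone_paths M X \<longleftrightarrow>
     \<not> (AE \<omega> in M. mono_on {0..} (\<lambda>t. X t \<omega>)) \<and>
     \<not> (AE \<omega> in M. antimono_on {0..} (\<lambda>t. X t \<omega>))"

definition running_sup :: "(real \<Rightarrow> 'a \<Rightarrow> real) \<Rightarrow> real \<Rightarrow> 'a \<Rightarrow> real" where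
  "running_sup X t \<omega> = (SUP s\<in>{0..t}. X s \<omega>)"

definition running_inf :: "(real \<Rightarrow> 'a \<Rightarrow> real) \<Rightarrow> real \<Rightarrow> 'a \<Rightarrow> real" where
  "running_inf X t \<omega> = (INF s\<in>{0..t}. X s \<omega>)"

text \<open>Y = sup X - X (reflected at the supremum), Yhat = X - inf X.\<close>
definition refl_sup :: "(real \<Rightarrow> 'a \<Rightarrow> real) \<Rightarrow> real \<Rightarrow> 'a \<Rightarrow> real" where
  "refl_sup X t \<omega> = running_sup X t \<omega> - X t \<omega>"

definition refl_inf :: "(real \<Rightarrow> 'a \<Rightarrow> real) \<Rightarrow> real \<Rightarrow> 'a \<Rightarrow> real" where
  "refl_inf X t \<omega> = X t \<omega> - running_inf X t \<omega>"

text \<open>First passage times, valued in the extended reals (inf of empty set = \<infinity>).\<close>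
definition tau :: "(real \<Rightarrow> 'a \<Rightarrow> real) \<Rightarrow> real \<Rightarrow> 'a \<Rightarrow> ereal" where
  "tau X a \<omega> = (INF t\<in>{t. 0 \<le> t \<and> refl_sup X t \<omega> > a}. ereal t)"

definition tau_hat :: "(real \<Rightarrow> 'a \<Rightarrow> real) \<Rightarrow> real \<Rightarrow> 'a \<Rightarrow> ereal" where
  "tau_hat X b \<omega> = (INF t\<in>{t. 0 \<le> t \<and> refl_inf X t \<omega> > b}. ereal t)"

end

theory Submission
  imports Defs
begin

definition cadlag :: "(real \<Rightarrow> real) \<Rightarrow> bool" where
  "cadlag x \<longleftrightarrow> (\<forall>t\<ge>0. continuous (at_right t) x
         \<and> (t > 0 \<longrightarrow> (\<exists>l. (x \<longlongrightarrow> l) (at_left t))))"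

lemma cadlag_local_bound:
  assumes "cadlag x" "y \<ge> 0"
  shows "\<exists>e>0. \<exists>B. \<forall>s\<ge>0. \<bar>s - y\<bar> < e \<longrightarrow> \<bar>x s\<bar> \<le> B"
proof -
  have rc: "(x \<longlongrightarrow> x y) (at_right y)"
    using assms unfolding cadlag_def by (simp add: continuous_within)
  then have "\<forall>\<^sub>F s in at_right y. dist (x s) (x y) < 1"
    using tendstoD zero_less_one by blast
  then obtain b1 where b1: "y < b1" "\<forall>s>y. s < b1 \<longrightarrow> dist (x s) (x y) < 1"
    by (auto simp: eventually_at_right_field)
  define e1 where "e1 = b1 - y"
  have e1: "e1 > 0" "\<And>s. y < s \<Longrightarrow> s < y + e1 \<Longrightarrow> dist (x s) (x y) < 1"
    using b1 by (auto simp: e1_def)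
  show ?thesis
  proof (cases "y = 0")
    case True
    show ?thesis
    proof (intro exI conjI allI impI)
      show "e1 > 0" by fact
      fix s :: real assume "s \<ge> 0" "\<bar>s - y\<bar> < e1"
      then consider "s = y" | "y < s \<and> s < y + e1" using True by linarith
      then show "\<bar>x s\<bar> \<le> \<bar>x y\<bar> + 1"
      proof cases
        case 1 then show ?thesis by simp
      next
        case 2 then have "dist (x s) (x y) < 1" using e1 by blast
        then show ?thesis by (simp add: dist_real_def)
      qed
    qed
  next
    case False
    then have "y > 0" using assms by simp
    then obtain l where l: "(x \<longlongrightarrow> l) (at_left y)" using assms unfolding cadlag_def by blast
    then have "\<forall>\<^sub>F s in at_left y. dist (x s) l < 1"
      using tendstoD zero_less_one by blast
    then obtain b2 where b2: "b2 < y" "\<forall>s>b2. s < y \<longrightarrow> dist (x s) l < 1"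
      by (auto simp: eventually_at_left_field)
    define e2 where "e2 = y - b2"
    have e2: "e2 > 0" "\<And>s. y - e2 < s \<Longrightarrow> s < y \<Longrightarrow> dist (x s) l < 1"
      using b2 by (auto simp: e2_def)
    show ?thesis
    proof (intro exI conjI allI impI)
      show "min e1 e2 > 0" using e1 e2 by simp
      fix s :: real assume "s \<ge> 0" "\<bar>s - y\<bar> < min e1 e2"
      then consider "s = y" | "y < s \<and> s < y + e1" | "y - e2 < s \<and> s < y" by linarith
      then show "\<bar>x s\<bar> \<le> max (\<bar>x y\<bar> + 1) (\<bar>l\<bar> + 1)"
      proof cases
        case 1 then show ?thesis by simp
      next
        case 2 then have "dist (x s) (x y) < 1" using e1 by blast
        then show ?thesis by (simp add: dist_real_def)
      next
        case 3 then have "dist (x s) l < 1" using e2 by blast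
        then show ?thesis by (simp add: dist_real_def)
      qed
    qed
  qed
qed

lemma cadlag_bounded:
  assumes "cadlag x"
  shows "\<exists>B. \<forall>s\<in>{0..t}. \<bar>x s\<bar> \<le> B"
proof -
  have "\<forall>y\<in>{0..t}. \<exists>e>0. \<exists>B. \<forall>s\<ge>0. \<bar>s - y\<bar> < e \<longrightarrow> \<bar>x s\<bar> \<le> B"
    using cadlag_local_bound[OF assms] by auto
  then obtain e B where eB: "\<And>y. y \<in> {0..t} \<Longrightarrow> e y > 0 \<and> (\<forall>s\<ge>0. \<bar>s - y\<bar> < e y \<longrightarrow> \<bar>x s\<bar> \<le> B y)"
    by metis
  have cp: "compact {0..t}" by simp
  have cov: "{0..t} \<subseteq> (\<Union>y\<in>{0..t}. ball y (e y))"
    using eB by force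
  obtain C where C: "C \<subseteq> {0..t}" "finite C" "{0..t} \<subseteq> (\<Union>y\<in>C. ball y (e y))"
    using compactE_image[OF cp, of "{0..t}" "\<lambda>y. ball y (e y)"] cov by blast
  show ?thesis
  proof (intro exI ballI)
    fix s assume s: "s \<in> {0..t}"
    then obtain y where y: "y \<in> C" "s \<in> ball y (e y)" using C by blast
    then have "\<bar>x s\<bar> \<le> B y" using eB[of y] C s by (auto simp: dist_real_def abs_minus_commute)
    also have "B y \<le> Max (B ` C)" using y C by simp
    finally show "\<bar>x s\<bar> \<le> Max (B ` C)" .
  qed
qed

lemma cadlag_bdd:
  assumes "cadlag x"
  shows "bdd_above (x ` {0..t})" "bdd_below (x ` {0..t})"
proof -
  obtain B where "\<forall>s\<in>{0..t}. \<bar>x s\<bar> \<le> B" using cadlag_bounded[OF assms] by blast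
  then show "bdd_above (x ` {0..t})" "bdd_below (x ` {0..t})"
    by (auto intro!: bdd_aboveI[of _ B] bdd_belowI[of _ "-B"] simp: abs_le_iff)
qed


lemma pathwise:
  fixes X :: "real \<Rightarrow> 'a \<Rightarrow> real"
  assumes cad: "cadlag (\<lambda>s. X s \<omega>)"
    and nj: "\<forall>t>0. X t \<omega> \<le> Lim (at_left t) (\<lambda>s. X s \<omega>)"
    and fin: "tau_hat X b \<omega> < \<infinity>" and ab: "a \<ge> b" and b: "b > 0"
  shows "tau X a \<omega> < tau_hat X b \<omega> \<longleftrightarrow> a - b < refl_sup X (real_of_ereal (tau_hat X b \<omega>)) \<omega>"
proof -
  define x where "x = (\<lambda>s. X s \<omega>)"
  define S where "S = (\<lambda>t. running_sup X t \<omega>)"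
  define I where "I = (\<lambda>t. running_inf X t \<omega>)"
  define A where "A = {t. 0 \<le> t \<and> refl_inf X t \<omega> > b}"
  define B where "B = {t. 0 \<le> t \<and> refl_sup X t \<omega> > a}"
  have cadx: "cadlag x" using cad by (simp add: x_def)
  have Sdef: "S t = (SUP s\<in>{0..t}. x s)" for t by (simp add: S_def x_def running_sup_def)
  have Idef: "I t = (INF s\<in>{0..t}. x s)" for t by (simp add: I_def x_def running_inf_def)
  have bda: "bdd_above (x ` {0..t})" and bdb: "bdd_below (x ` {0..t})" for t
    using cadlag_bdd[OF cadx] by auto
  have Sup: "x s \<le> S t" if "0 \<le> s" "s \<le> t" for s t
    unfolding Sdef using that bda by (auto intro!: cSUP_upper)
  have Ilo: "I t \<le> x s" if "0 \<le> s" "s \<le> t" for s t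
    unfolding Idef using that bdb by (auto intro!: cINF_lower)
  have Smono: "S s \<le> S t" if "0 \<le> s" "s \<le> t" for s t
    unfolding Sdef using that bda by (auto intro!: cSUP_subset_mono)
  have Ain: "t \<in> A \<longleftrightarrow> 0 \<le> t \<and> x t - I t > b" for t
    by (simp add: A_def refl_inf_def x_def I_def)
  have Bin: "t \<in> B \<longleftrightarrow> 0 \<le> t \<and> S t - x t > a" for t
    by (simp add: B_def refl_sup_def x_def S_def)
  have tauh: "tau_hat X b \<omega> = (INF t\<in>A. ereal t)" by (simp add: tau_hat_def A_def)
  have taua: "tau X a \<omega> = (INF t\<in>B. ereal t)" by (simp add: tau_def B_def)
  have "A \<noteq> {}" using fin by (auto simp: tauh top_ereal_def)
  have Tge: "(INF t\<in>A. ereal t) \<ge> 0" using Ain by (auto intro!: INF_greatest)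
  have nm: "tau_hat X b \<omega> \<noteq> -\<infinity>" using Tge tauh by auto
  define T where "T = real_of_ereal (tau_hat X b \<omega>)"
  have T: "tau_hat X b \<omega> = ereal T" using fin nm unfolding T_def by (cases "tau_hat X b \<omega>") auto
  have T0: "T \<ge> 0" using Tge T tauh by simp
  have TleA: "T \<le> t" if "t \<in> A" for t
    using INF_lower[OF that, of ereal] T tauh by simp
  have belowT: "x s - I s \<le> b" if "0 \<le> s" "s < T" for s
    using TleA[of s] that Ain by force
  \<comment> \<open>H T \<ge> b by right continuity\<close>
  have HTge: "x T - I T \<ge> b"
  proof (rule ccontr)
    assume neg: "\<not> ?thesis"
    define eps where "eps = (b - (x T - I T)) / 3"
    have eps: "eps > 0" using neg by (simp add: eps_def)
    have rc: "(x \<longlongrightarrow> x T) (at_right T)"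
      using cadx T0 unfolding cadlag_def by (simp add: continuous_within)
    then have "\<forall>\<^sub>F s in at_right T. dist (x s) (x T) < eps"
      using tendstoD eps by blast
    then obtain c where c: "T < c" "\<forall>s>T. s < c \<longrightarrow> dist (x s) (x T) < eps"
      by (auto simp: eventually_at_right_field)
    have "ereal T < ereal c" using c by simp
    then obtain t where t: "t \<in> A" "t < c" using T tauh INF_less_iff[of ereal A "ereal c"] by auto
    have "T \<le> t" using TleA t by simp
    have xt: "x t < x T + eps"
    proof (cases "t = T")
      case False then have "dist (x t) (x T) < eps" using c t \<open>T \<le> t\<close> by auto
      then show ?thesis by (simp add: dist_real_def)
    qed (use eps in simp)
    have "I t \<ge> min (I T) (x T - eps)"
      unfolding Idef[of t]
    proof (rule cINF_greatest)
      show "{0..t} \<noteq> {}" using T0 \<open>T \<le> t\<close> by simp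
      fix s assume s: "s \<in> {0..t}"
      show "min (I T) (x T - eps) \<le> x s"
      proof (cases "s \<le> T")
        case True then show ?thesis using Ilo[of s T] s by (simp add: min.coboundedI1)
      next
        case False
        then have "dist (x s) (x T) < eps" using c s t by auto
        then show ?thesis by (simp add: dist_real_def min.coboundedI2)
      qed
    qed
    moreover have "I T \<le> x T" using Ilo[of T T] T0 by simp
    ultimately have "I t \<ge> I T - eps" using eps by (auto simp: min_def split: if_splits)
    then have "x t - I t < x T - I T + 2 * eps" using xt by linarith
    moreover have "x t - I t > b" using t Ain by simp
    moreover have "3 * eps = b - (x T - I T)" by (simp add: eps_def)
    ultimately show False using eps by linarith
  qed
  have I0: "I 0 = x 0" by (simp add: Idef)
  have Tpos: "T > 0"
  proof (rule ccontr)
    assume "\<not> T > 0" then have "T = 0" using T0 by simp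
    then show False using HTge I0 b by simp
  qed
  \<comment> \<open>H T \<le> b by absence of positive jumps\<close>
  have HTle: "x T - I T \<le> b"
  proof -
    obtain l where l: "(x \<longlongrightarrow> l) (at_left T)" using cadx Tpos unfolding cadlag_def by (meson less_imp_le)
    have Lim: "Lim (at_left T) x = l" using l by (simp add: tendsto_Lim)
    have xTl: "x T \<le> l" using nj Tpos Lim unfolding x_def by metis
    have "x T - b \<le> I T"
      unfolding Idef
    proof (rule cINF_greatest)
      show "{0..T} \<noteq> {}" using T0 by simp
      fix r assume r: "r \<in> {0..T}"
      show "x T - b \<le> x r"
      proof (cases "r = T")
        case True then show ?thesis using b by simp
      next
        case False
        then have rT: "r < T" using r by simp
        have "\<forall>\<^sub>F s in at_left T. x s \<le> x r + b"
          unfolding eventually_at_left_field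
        proof (intro exI[of _ r] conjI allI impI)
          show "r < T" by fact
          fix s assume "r < s" "s < T"
          then have "x s - I s \<le> b" using belowT r by simp
          moreover have "I s \<le> x r" using Ilo[of r s] r \<open>r < s\<close> by simp
          ultimately show "x s \<le> x r + b" by simp
        qed
        then have "l \<le> x r + b"
          using tendsto_upperbound[OF l] by simp
        then show ?thesis using xTl by simp
      qed
    qed
    then show ?thesis by simp
  qed
  have HT: "x T = I T + b" using HTge HTle by simp
  have YT: "refl_sup X (real_of_ereal (tau_hat X b \<omega>)) \<omega> = S T - x T"
    by (simp add: T_def refl_sup_def S_def x_def)
  show ?thesis
  proof
    assume "tau X a \<omega> < tau_hat X b \<omega>"
    then obtain t where t: "t \<in> B" "ereal t < ereal T"
      using taua T INF_less_iff[of ereal B "ereal T"] by auto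
    have "S t \<le> S T" using Smono t Bin by simp
    moreover have "I T \<le> x t" using Ilo[of t T] t Bin by simp
    moreover have "S t - x t > a" using t Bin by simp
    ultimately show "a - b < refl_sup X (real_of_ereal (tau_hat X b \<omega>)) \<omega>"
      using HT YT by simp
  next
    assume "a - b < refl_sup X (real_of_ereal (tau_hat X b \<omega>)) \<omega>"
    then have gap: "S T - I T > a" using HT YT by simp
    define m where "m = S T - I T - a"
    define d where "d = min (m/3) (b/2)"
    have m: "m > 0" using gap by (simp add: m_def)
    have d: "d > 0" "d \<le> m/3" "d \<le> b/2" using m b by (auto simp: d_def)
    have "S T - d < S T" using d by simp
    then obtain u where u: "u \<in> {0..T}" "S T - d < x u"
      using less_cSUP_iff[of "{0..T}" x "S T - d"] T0 bda by (auto simp: Sdef[symmetric])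
    have "I T < I T + d" using d by simp
    then obtain v where v: "v \<in> {0..T}" "x v < I T + d"
      using cINF_less_iff[of "{0..T}" x "I T + d"] T0 bdb by (auto simp: Idef[symmetric])
    show "tau X a \<omega> < tau_hat X b \<omega>"
    proof (cases "v \<le> u")
      case True
      have "I u \<le> x v" using Ilo[of v u] v True by simp
      then have "x u - I u > b" using u v d m ab by (simp add: m_def)
      then have "u \<in> A" using u Ain by simp
      then have "u = T" using TleA u by force
      then have False using u HT d ab by (simp add: m_def)
      then show ?thesis ..
    next
      case False
      have "x u \<le> S v" using Sup[of u v] u False by simp
      then have "S v - x v > a" using u v d m by (simp add: m_def)
      then have vB: "v \<in> B" using v Bin by simp
      have "v \<noteq> T" using v HT d by auto
      then have "v < T" using v by simp
      have "tau X a \<omega> \<le> ereal v" using INF_lower[OF vB, of ereal] taua by simp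
      also have "\<dots> < ereal T" using \<open>v < T\<close> by simp
      finally show ?thesis using T by simp
    qed
  qed
qed


lemma levy_meas:
  assumes "levy_process M X" "t \<ge> 0"
  shows "X t \<in> borel_measurable M"
  using assms by (simp add: levy_process_def)

lemma levy_incr_distr:
  assumes L: "levy_process M X" and h: "h > 0" and Cb: "C \<in> sets borel"
  shows "measure M {\<omega>\<in>space M. X (real (Suc k) * h) \<omega> - X (real k * h) \<omega> \<in> C}
        = measure M {\<omega>\<in>space M. X h \<omega> \<in> C}"
proof -
  have eq: "real (Suc k) * h = h + real k * h" by (simp add: algebra_simps)
  have d: "distr M borel (\<lambda>\<omega>. X (h + real k * h) \<omega> - X (real k * h) \<omega>) = distr M borel (X h)"
    using L h unfolding levy_process_def by auto
  have m1: "(\<lambda>\<omega>. X (h + real k * h) \<omega> - X (real k * h) \<omega>) \<in> borel_measurable M"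
    using levy_meas[OF L, of "h + real k * h"] levy_meas[OF L, of "real k * h"] h by auto
  have m2: "X h \<in> borel_measurable M" using levy_meas[OF L, of h] h by simp
  have "measure M {\<omega>\<in>space M. X (real (Suc k) * h) \<omega> - X (real k * h) \<omega> \<in> C}
      = measure (distr M borel (\<lambda>\<omega>. X (h + real k * h) \<omega> - X (real k * h) \<omega>)) C"
    unfolding eq by (subst measure_distr[OF m1 Cb]) (auto intro!: arg_cong[where f="measure M"])
  also have "\<dots> = measure (distr M borel (X h)) C" by (simp add: d)
  also have "\<dots> = measure M {\<omega>\<in>space M. X h \<omega> \<in> C}"
    by (subst measure_distr[OF m2 Cb]) (auto intro!: arg_cong[where f="measure M"])
  finally show ?thesis .
qed

lemma levy_incr_indep:
  assumes L: "levy_process M X" and h: "h > 0" and Cb: "C \<in> sets borel"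
  shows "measure M {\<omega>\<in>space M. \<forall>k<n. X (real (Suc k) * h) \<omega> - X (real k * h) \<omega> \<in> C}
        = measure M {\<omega>\<in>space M. X h \<omega> \<in> C} ^ n"
proof -
  interpret prob_space M using L by (simp add: levy_process_def)
  define Z where "Z = (\<lambda>k \<omega>. X (real (Suc k) * h) \<omega> - X (real k * h) \<omega>)"
  show ?thesis
  proof (cases "n = 0")
    case True then show ?thesis by (simp add: prob_space)
  next
    case False
    have ind: "indep_vars (\<lambda>_. borel) Z {..<n}"
      using L h unfolding levy_process_def Z_def
      by (auto elim!: allE[of _ n] allE[of _ "\<lambda>i. real i * h"])
    have "prob (\<Inter>k\<in>{..<n}. Z k -` C \<inter> space M) = (\<Prod>k\<in>{..<n}. prob (Z k -` C \<inter> space M))"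
      by (rule indep_varsD[OF ind]) (use False Cb in auto)
    moreover have "(\<Inter>k\<in>{..<n}. Z k -` C \<inter> space M) = {\<omega>\<in>space M. \<forall>k<n. Z k \<omega> \<in> C}"
      using False by auto
    moreover have "prob (Z k -` C \<inter> space M) = prob {\<omega>\<in>space M. X h \<omega> \<in> C}" for k
      using levy_incr_distr[OF L h Cb, of k] unfolding Z_def
      by (auto intro: back_subst[where P="\<lambda>A. measure M A = _"])
    ultimately show ?thesis by (simp add: Z_def)
  qed
qed


lemma rc_rat_le:
  fixes x :: "real \<Rightarrow> real"
  assumes rc: "continuous (at_right t) x" and d: "d > 0"
    and le: "\<And>r. r \<in> \<rat> \<Longrightarrow> t < r \<Longrightarrow> r < t + d \<Longrightarrow> x r \<le> c"
  shows "x t \<le> c"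
proof (rule ccontr)
  assume "\<not> x t \<le> c"
  then have "c < x t" by simp
  moreover have "(x \<longlongrightarrow> x t) (at_right t)" using rc by (simp add: continuous_within)
  ultimately have "\<forall>\<^sub>F s in at_right t. c < x s" by (rule order_tendstoD(1)[rotated])
  then obtain bb where bb: "t < bb" "\<forall>s>t. s < bb \<longrightarrow> c < x s"
    by (auto simp: eventually_at_right_field)
  have "t < min bb (t + d)" using bb d by simp
  then obtain r where r: "r \<in> \<rat>" "t < r" "r < min bb (t + d)" using Rats_dense_in_real by blast
  then have "c < x r" using bb by simp
  moreover have "x r \<le> c" using le r by simp
  ultimately show False by simp
qed

lemma rc_rat_ge:
  fixes x :: "real \<Rightarrow> real"
  assumes rc: "continuous (at_right t) x" and d: "d > 0"
    and le: "\<And>r. r \<in> \<rat> \<Longrightarrow> t < r \<Longrightarrow> r < t + d \<Longrightarrow> c \<le> x r"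
  shows "c \<le> x t"
proof -
  have "continuous (at_right t) (\<lambda>s. - x s)" using rc by (intro continuous_minus)
  then have "- x t \<le> - c" using rc_rat_le[of t "\<lambda>s. - x s" d "- c"] le d by auto
  then show ?thesis by simp
qed

lemma antimono_from_rats:
  fixes x :: "real \<Rightarrow> real"
  assumes rc: "\<forall>t\<ge>0. continuous (at_right t) x"
    and rat: "\<forall>q\<in>\<rat>. \<forall>r\<in>\<rat>. 0 \<le> q \<longrightarrow> q < r \<longrightarrow> x r \<le> x q"
  shows "antimono_on {0..} x"
proof -
  have step1: "x t \<le> x q" if "q \<in> \<rat>" "0 \<le> q" "q < t" for q t
    by (rule rc_rat_le[of t x 1]) (use rc that rat in auto)
  show ?thesis
  proof (rule monotone_onI)
    fix s t :: real assume st: "s \<in> {0..}" "t \<in> {0..}" "s \<le> t"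
    show "x t \<le> x s"
    proof (cases "s = t")
      case False
      then have "s < t" using st by simp
      show ?thesis
        by (rule rc_rat_ge[of s x "t - s"]) (use rc st \<open>s < t\<close> step1 in auto)
    qed simp
  qed
qed

lemma levy_incr_distr2:
  assumes L: "levy_process M X" and s: "s \<ge> 0" and t: "t \<ge> 0" and Cb: "C \<in> sets borel"
  shows "measure M {\<omega>\<in>space M. X (t + s) \<omega> - X s \<omega> \<in> C}
        = measure M {\<omega>\<in>space M. X t \<omega> \<in> C}"
proof -
  have d: "distr M borel (\<lambda>\<omega>. X (t + s) \<omega> - X s \<omega>) = distr M borel (X t)"
    using L s t unfolding levy_process_def by auto
  have m1: "(\<lambda>\<omega>. X (t + s) \<omega> - X s \<omega>) \<in> borel_measurable M"
    using levy_meas[OF L, of "t + s"] levy_meas[OF L, of s] s t by auto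
  have m2: "X t \<in> borel_measurable M" using levy_meas[OF L, of t] t by simp
  have "measure M {\<omega>\<in>space M. X (t + s) \<omega> - X s \<omega> \<in> C}
      = measure (distr M borel (\<lambda>\<omega>. X (t + s) \<omega> - X s \<omega>)) C"
    by (subst measure_distr[OF m1 Cb]) (auto intro!: arg_cong[where f="measure M"])
  also have "\<dots> = measure (distr M borel (X t)) C" by (simp add: d)
  also have "\<dots> = measure M {\<omega>\<in>space M. X t \<omega> \<in> C}"
    by (subst measure_distr[OF m2 Cb]) (auto intro!: arg_cong[where f="measure M"])
  finally show ?thesis .
qed

lemma levy_tauhat_finite_AE:
  assumes L: "levy_process M X" and h: "h > 0"
    and p: "measure M {\<omega>\<in>space M. X h \<omega> > b} > 0"
  shows "AE \<omega> in M. \<exists>k. X (real (Suc k) * h) \<omega> - X (real k * h) \<omega> > b"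
proof -
  interpret prob_space M using L by (simp add: levy_process_def)
  have mX[measurable]: "X (real k * h) \<in> borel_measurable M" for k
    using levy_meas[OF L] h by simp
  have mX'[measurable]: "X (real (Suc k) * h) \<in> borel_measurable M" for k
    using levy_meas[OF L] h by (simp del: of_nat_Suc)
  have mXh[measurable]: "X h \<in> borel_measurable M" using levy_meas[OF L] h by simp
  define N where "N = {\<omega>\<in>space M. \<forall>k. X (real (Suc k) * h) \<omega> - X (real k * h) \<omega> \<in> {..b}}"
  have N: "N \<in> sets M" unfolding N_def by measurable
  define q where "q = measure M {\<omega>\<in>space M. X h \<omega> \<in> {..b}}"
  have "{\<omega>\<in>space M. X h \<omega> \<in> {..b}} = space M - {\<omega>\<in>space M. X h \<omega> > b}" by auto
  then have q: "q = 1 - measure M {\<omega>\<in>space M. X h \<omega> > b}"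
    unfolding q_def by (simp add: prob_compl)
  have q0: "q \<ge> 0" by (simp add: q_def)
  have q1: "q < 1" using q p by simp
  have le: "measure M N \<le> q ^ n" for n
  proof -
    have "measure M N \<le> measure M {\<omega>\<in>space M. \<forall>k<n. X (real (Suc k) * h) \<omega> - X (real k * h) \<omega> \<in> {..b}}"
      by (rule finite_measure_mono) (auto simp: N_def simp del: of_nat_Suc)
    also have "\<dots> = q ^ n" unfolding q_def by (rule levy_incr_indep[OF L h]) simp
    finally show ?thesis .
  qed
  have "(\<lambda>n. q ^ n) \<longlonglongrightarrow> 0" using q0 q1 by (intro LIMSEQ_power_zero) simp
  then have "measure M N \<le> 0"
    by (rule tendsto_le[OF trivial_limit_sequentially _ tendsto_const]) (use le in auto)
  then have "measure M N = 0" using measure_nonneg[of M N] by simp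
  then have "N \<in> null_sets M" using N by (simp add: emeasure_eq_measure null_setsI)
  then show ?thesis
    by (rule AE_I') (auto simp: N_def simp del: of_nat_Suc dest: spec[where x=k] intro: leI)
qed


lemma levy_cadlag:
  assumes "levy_process M X" "\<omega> \<in> space M"
  shows "cadlag (\<lambda>s. X s \<omega>)"
  using assms unfolding levy_process_def cadlag_def by blast

lemma telescope:
  assumes "X 0 \<omega> = (0::real)"
  shows "X (real N * h) \<omega> = (\<Sum>k<N. X (real (Suc k) * h) \<omega> - X (real k * h) \<omega>)"
  by (induction N) (use assms in auto)

lemma levy_exists_pos:
  assumes L: "levy_process M X" and nm: "non_monotone_paths M X" and b: "b > 0"
  shows "\<exists>h>0. measure M {\<omega>\<in>space M. X h \<omega> > b} > 0"
proof (rule ccontr)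
  assume "\<not> ?thesis"
  then have H: "measure M {\<omega>\<in>space M. X h \<omega> > b} = 0" if "h > 0" for h
    using that measure_nonneg[of M "{\<omega>\<in>space M. X h \<omega> > b}"] by (metis less_eq_real_def)
  interpret prob_space M using L by (simp add: levy_process_def)
  have X0: "X 0 \<omega> = 0" if "\<omega> \<in> space M" for \<omega> using L that by (simp add: levy_process_def)
  have claim0: "measure M {\<omega>\<in>space M. X h \<omega> > 0} = 0" if h: "h > 0" for h
  proof (rule ccontr)
    assume ne: "measure M {\<omega>\<in>space M. X h \<omega> > 0} \<noteq> 0"
    have mXh[measurable]: "X h \<in> borel_measurable M" using levy_meas[OF L] h by simp
    have "\<exists>n. measure M {\<omega>\<in>space M. X h \<omega> > 1 / real (Suc n)} \<noteq> 0"
    proof (rule ccontr)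
      assume "\<not> ?thesis"
      then have "{\<omega>\<in>space M. X h \<omega> > 1 / real (Suc n)} \<in> null_sets M" for n
        by (auto simp: emeasure_eq_measure intro!: null_setsI)
      then have "(\<Union>n. {\<omega>\<in>space M. X h \<omega> > 1 / real (Suc n)}) \<in> null_sets M" by blast
      moreover have "(\<Union>n. {\<omega>\<in>space M. X h \<omega> > 1 / real (Suc n)}) = {\<omega>\<in>space M. X h \<omega> > 0}"
      proof safe
        fix \<omega> assume "\<omega> \<in> space M" "X h \<omega> > 0"
        then obtain n where "1 / real (Suc n) < X h \<omega>"
          using reals_Archimedean by (metis inverse_eq_divide of_nat_Suc)
        then show "\<omega> \<in> (\<Union>n. {\<omega>\<in>space M. X h \<omega> > 1 / real (Suc n)})" using \<open>\<omega> \<in> space M\<close> by auto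
      next
        fix \<omega> n assume "1 / real (Suc n) < X h \<omega>"
        moreover have "0 < 1 / real (Suc n)" by simp
        ultimately show "0 < X h \<omega>" by linarith
      qed
      ultimately show False using ne measure_eq_0_null_sets by metis
    qed
    then obtain n where n: "measure M {\<omega>\<in>space M. X h \<omega> > 1 / real (Suc n)} \<noteq> 0" by blast
    define e where "e = 1 / real (Suc n)"
    have e: "e > 0" by (simp add: e_def)
    define p where "p = measure M {\<omega>\<in>space M. X h \<omega> \<in> {e<..}}"
    have p: "p > 0" using n measure_nonneg[of M] by (simp add: p_def e_def less_le)
    obtain N :: nat where N: "b < real N * e" using ex_less_of_nat_mult[OF e] by blast
    have Npos: "N > 0" using N b by (cases N) auto
    have "p ^ N = measure M {\<omega>\<in>space M. \<forall>k<N. X (real (Suc k) * h) \<omega> - X (real k * h) \<omega> \<in> {e<..}}"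
      unfolding p_def by (rule levy_incr_indep[OF L h, symmetric]) simp
    also have "\<dots> \<le> measure M {\<omega>\<in>space M. X (real N * h) \<omega> > b}"
    proof (rule finite_measure_mono)
      have [measurable]: "X (real N * h) \<in> borel_measurable M"
        using levy_meas[OF L, of "real N * h"] h by simp
      show "{\<omega>\<in>space M. X (real N * h) \<omega> > b} \<in> sets M"
        by measurable
      show "{\<omega>\<in>space M. \<forall>k<N. X (real (Suc k) * h) \<omega> - X (real k * h) \<omega> \<in> {e<..}}
            \<subseteq> {\<omega>\<in>space M. X (real N * h) \<omega> > b}"
      proof safe
        fix \<omega> assume w: "\<omega> \<in> space M" "\<forall>k<N. X (real (Suc k) * h) \<omega> - X (real k * h) \<omega> \<in> {e<..}"
        have "real N * e = (\<Sum>k<N. e)" by simp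
        also have "\<dots> < (\<Sum>k<N. X (real (Suc k) * h) \<omega> - X (real k * h) \<omega>)"
          by (rule sum_strict_mono) (use Npos w in \<open>auto simp del: of_nat_Suc\<close>)
        also have "\<dots> = X (real N * h) \<omega>" using telescope[of X \<omega> N h] X0 w by simp
        finally show "b < X (real N * h) \<omega>" using N by simp
      qed
    qed
    also have "\<dots> = 0" using H[of "real N * h"] Npos h by simp
    finally have "p ^ N \<le> 0" .
    moreover have "p ^ N > 0" using p by simp
    ultimately show False by simp
  qed
  have pair: "AE \<omega> in M. X r \<omega> \<le> X q \<omega>" if "0 \<le> q" "q < r" for q r
  proof -
    have mr[measurable]: "X r \<in> borel_measurable M" using levy_meas[OF L, of r] that by simp
    have mq[measurable]: "X q \<in> borel_measurable M" using levy_meas[OF L, of q] that by simp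
    have m: "(\<lambda>\<omega>. X ((r - q) + q) \<omega> - X q \<omega>) \<in> borel_measurable M"
      using levy_meas[OF L, of "(r - q) + q"] levy_meas[OF L, of q] that by auto
    have "measure M {\<omega>\<in>space M. X ((r - q) + q) \<omega> - X q \<omega> \<in> {0<..}}
        = measure M {\<omega>\<in>space M. X (r - q) \<omega> \<in> {0<..}}"
      by (rule levy_incr_distr2[OF L]) (use that in auto)
    also have "\<dots> = 0" using claim0[of "r - q"] that by simp
    finally have "{\<omega>\<in>space M. X ((r - q) + q) \<omega> - X q \<omega> \<in> {0<..}} \<in> null_sets M"
      by (auto simp: emeasure_eq_measure intro!: null_setsI)
    then show ?thesis by (rule AE_I') auto
  qed
  have "AE \<omega> in M. \<forall>q\<in>\<rat>. \<forall>r\<in>\<rat>. 0 \<le> q \<longrightarrow> q < r \<longrightarrow> X r \<omega> \<le> X q \<omega>"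
    using pair by (simp add: AE_ball_countable countable_rat)
  then have "AE \<omega> in M. antimono_on {0..} (\<lambda>t. X t \<omega>)"
  proof (rule AE_mp[OF _ AE_I2[of M]])
    fix \<omega> assume "\<omega> \<in> space M"
    then have "cadlag (\<lambda>s. X s \<omega>)" by (rule levy_cadlag[OF L])
    then show "(\<forall>q\<in>\<rat>. \<forall>r\<in>\<rat>. 0 \<le> q \<longrightarrow> q < r \<longrightarrow> X r \<omega> \<le> X q \<omega>) \<longrightarrow> antimono_on {0..} (\<lambda>t. X t \<omega>)"
      using antimono_from_rats[of "\<lambda>t. X t \<omega>"] unfolding cadlag_def by blast
  qed
  then show False using nm unfolding non_monotone_paths_def by blast
qed

lemma tauhat_finite:
  assumes cad: "cadlag (\<lambda>s. X s \<omega>)" and h: "h > 0"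
    and k: "X (real (Suc k) * h) \<omega> - X (real k * h) \<omega> > b"
  shows "tau_hat X b \<omega> < \<infinity>"
proof -
  define t where "t = real (Suc k) * h"
  have t0: "t \<ge> 0" using h by (simp add: t_def)
  have "running_inf X t \<omega> \<le> X (real k * h) \<omega>"
    unfolding running_inf_def
    by (rule cINF_lower) (use cadlag_bdd[OF cad] h in \<open>auto simp: t_def\<close>)
  then have "t \<in> {t. 0 \<le> t \<and> refl_inf X t \<omega> > b}"
    using k t0 by (simp add: refl_inf_def t_def)
  then have "tau_hat X b \<omega> \<le> ereal t" unfolding tau_hat_def by (rule INF_lower)
  moreover have "ereal t < \<infinity>" by simp
  ultimately show ?thesis by (rule le_less_trans)
qed

theorem lemma1:
  fixes M :: "'a measure" and X :: "real \<Rightarrow> 'a \<Rightarrow> real" and a b :: real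
  assumes "spectrally_negative M X"
    and "non_monotone_paths M X"
    and "a \<ge> b" and "b > 0"
  shows "AE \<omega> in M. (tau X a \<omega> < tau_hat X b \<omega> \<longleftrightarrow>
            tau_hat X b \<omega> < \<infinity> \<and> a - b < refl_sup X (real_of_ereal (tau_hat X b \<omega>)) \<omega>)"
proof -
  have L: "levy_process M X" and nj: "AE \<omega> in M. \<forall>t>0. X t \<omega> \<le> Lim (at_left t) (\<lambda>s. X s \<omega>)"
    using assms(1) by (auto simp: spectrally_negative_def)
  obtain h where h: "h > 0" "measure M {\<omega>\<in>space M. X h \<omega> > b} > 0"
    using levy_exists_pos[OF L assms(2,4)] by blast
  have fin: "AE \<omega> in M. \<exists>k. X (real (Suc k) * h) \<omega> - X (real k * h) \<omega> > b"
    by (rule levy_tauhat_finite_AE[OF L h])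
  show ?thesis
    using nj fin AE_space
  proof eventually_elim
    case (elim \<omega>)
    have cad: "cadlag (\<lambda>s. X s \<omega>)" using levy_cadlag[OF L elim(3)] .
    obtain k where k: "X (real (Suc k) * h) \<omega> - X (real k * h) \<omega> > b" using elim(2) by blast
    have tf: "tau_hat X b \<omega> < \<infinity>" using tauhat_finite[of X \<omega> h b k, OF cad h(1) k] .
    show ?case using pathwise[OF cad elim(1) tf assms(3,4)] tf by simp
  qed
qed

end
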